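(* Let $T>0$ and let $\boldsymbol\rho=(\rho_1,\rho_2)\in C^{1,2}([0,T)\times\mathbb T^d;\mathbb R^2)$ be a classical solution of the species-blind system $$\partial_t\rho_i=\Delta\Big(\rho_i\frac{\hat\Phi(\rho_1+\rho_2)}{\rho_1+\rho_2}\Big),\quad i=1,2,$$ with initial condition $\boldsymbol\rho_0\in C(\mathbb T^d;\mathbb R_+^2)$ satisfying $\boldsymbol\rho_0(\mathbb T^d)\subset A=\{\boldsymbol\rho\in(0,\infty)^2:\rho_1+\rho_2<\hat\rho_c\}$. Then $$0<\inf_{(t,u)\in[0,T)\times\mathbb T^d}\min(\rho_1,\rho_2)(t,u)\le\sup_{(t,u)\in[0,T)\times\mathbb T^d}(\rho_1+\rho_2)(t,u)<\hat\rho_c.$$ In particular, there is $\delta>0$ such that $\boldsymbol\rho(t,\mathbb T^d)\subset\{\mathbf r\in A: d(\mathbf r,\partial A)>\delta\}$ for all $t\in[0,T)$.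
   Context: Let $\hat g:\mathbb N_0\to\mathbb R_+$ be a one-species jump rate: $\hat g(0)=0$, $\hat g(k)>0$ for $k\ge1$, $\sup_k|\hat g(k+1)-\hat g(k)|<\infty$, and $\hat g!(k)^{1/k}$ converges as $k\to\infty$ to a limit in $(0,+\infty]$, where $\hat g!(k)=\hat g(1)\cdots\hat g(k)$. $\hat Z(\varphi)=\sum_k\varphi^k/\hat g!(k)$, $\hat R(\varphi)=\varphi\hat Z'(\varphi)/\hat Z(\varphi)$, $\hat\rho_c\in(0,+\infty]$ the supremum of $\hat R$ (critical density), $\hat\Phi=\hat R^{-1}$ on $[0,\hat\rho_c)$. A classical solution of the species-blind system on $[0,T)\times\mathbb T^d$ is a $C^{1,2}$ function satisfying the system with $0\le\rho_1+\rho_2<\hat\rho_c$ everywhere. *)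

theory Defs
  imports "HOL-Analysis.Analysis"
begin

definition gfact :: "(nat \<Rightarrow> real) \<Rightarrow> nat \<Rightarrow> real" where
  "gfact g k = (\<Prod>i\<in>{1..k}. g i)"

definition jump_rate :: "(nat \<Rightarrow> real) \<Rightarrow> bool" where
  "jump_rate g \<longleftrightarrow>
     g 0 = 0 \<and> (\<forall>k\<ge>1. g k > 0) \<and>
     (\<exists>C. \<forall>k. \<bar>g (k+1) - g k\<bar> \<le> C) \<and>
     ((\<exists>L>0. (\<lambda>k. root k (gfact g k)) \<longlonglongrightarrow> L) \<or>
      filterlim (\<lambda>k. root k (gfact g k)) at_top sequentially)"

text \<open>Radius of convergence of Z (equals the limit of (g!(k))^(1/k)).\<close>
definition phi_star :: "(nat \<Rightarrow> real) \<Rightarrow> ereal" where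
  "phi_star g = conv_radius (\<lambda>k. 1 / gfact g k)"

definition Zg :: "(nat \<Rightarrow> real) \<Rightarrow> real \<Rightarrow> real" where
  "Zg g \<phi> = (\<Sum>k. \<phi> ^ k / gfact g k)"

definition Rg :: "(nat \<Rightarrow> real) \<Rightarrow> real \<Rightarrow> real" where
  "Rg g \<phi> = \<phi> * deriv (Zg g) \<phi> / Zg g \<phi>"

definition fug_dom :: "(nat \<Rightarrow> real) \<Rightarrow> real set" where
  "fug_dom g = {\<phi>. 0 \<le> \<phi> \<and> ereal \<phi> < phi_star g}"

definition rho_c :: "(nat \<Rightarrow> real) \<Rightarrow> ereal" where
  "rho_c g = (SUP \<phi>\<in>fug_dom g. ereal (Rg g \<phi>))"

definition Phig :: "(nat \<Rightarrow> real) \<Rightarrow> real \<Rightarrow> real" where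
  "Phig g r = (THE \<phi>. \<phi> \<in> fug_dom g \<and> Rg g \<phi> = r)"

text \<open>Species-blind flux coefficient rho_i * Phi(rho_1+rho_2)/(rho_1+rho_2); at total
  density 0 we use its continuous extension g(1)*rho_i (since Phi(s) ~ g(1) s).\<close>
definition flux :: "(nat \<Rightarrow> real) \<Rightarrow> real \<Rightarrow> real \<Rightarrow> real" where
  "flux g ri s = (if s = 0 then g 1 * ri else ri * Phig g s / s)"

text \<open>Functions on T^d = R^d / Z^d are represented as Z^d-periodic functions on R^d.\<close>
definition periodic_fun :: "(real^'d \<Rightarrow> 'b) \<Rightarrow> bool" where
  "periodic_fun f \<longleftrightarrow> (\<forall>x j. f (x + axis j 1) = f x)"

definition C12 :: "real \<Rightarrow> (real \<Rightarrow> real^'d \<Rightarrow> real) \<Rightarrow> bool" where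
  "C12 T f \<longleftrightarrow> (\<forall>t\<in>{0..<T}. periodic_fun (f t)) \<and>
    (\<exists>ft D D2.
      (\<forall>t\<in>{0..<T}. \<forall>x.
         ((\<lambda>s. f s x) has_real_derivative ft t x) (at t within {0..<T}) \<and>
         (\<forall>j. ((\<lambda>h. f t (x + h *\<^sub>R axis j 1)) has_real_derivative D j t x) (at 0)) \<and>
         (\<forall>j k. ((\<lambda>h. D j t (x + h *\<^sub>R axis k 1)) has_real_derivative D2 j k t x) (at 0))) \<and>
      continuous_on ({0..<T} \<times> UNIV) (\<lambda>(t,x). f t x) \<and>
      continuous_on ({0..<T} \<times> UNIV) (\<lambda>(t,x). ft t x) \<and>
      (\<forall>j. continuous_on ({0..<T} \<times> UNIV) (\<lambda>(t,x). D j t x)) \<and>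
      (\<forall>j k. continuous_on ({0..<T} \<times> UNIV) (\<lambda>(t,x). D2 j k t x)))"

definition heat_eq_at :: "(real \<Rightarrow> real^'d \<Rightarrow> real) \<Rightarrow> (real \<Rightarrow> real^'d \<Rightarrow> real)
    \<Rightarrow> real \<Rightarrow> real \<Rightarrow> real^'d \<Rightarrow> bool" where
  "heat_eq_at f w T t x \<longleftrightarrow>
    (\<exists>ft Dw D2w.
       ((\<lambda>s. f s x) has_real_derivative ft) (at t within {0..<T}) \<and>
       (\<forall>j y. ((\<lambda>h. w t (y + h *\<^sub>R axis j 1)) has_real_derivative Dw j y) (at 0)) \<and>
       (\<forall>j. ((\<lambda>h. Dw j (x + h *\<^sub>R axis j 1)) has_real_derivative D2w j) (at 0)) \<and>
       ft = (\<Sum>j\<in>UNIV. D2w j))"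

definition species_blind_solution ::
  "(nat \<Rightarrow> real) \<Rightarrow> real \<Rightarrow> (real \<Rightarrow> real^'d \<Rightarrow> real) \<Rightarrow> (real \<Rightarrow> real^'d \<Rightarrow> real) \<Rightarrow> bool" where
  "species_blind_solution g T rho1 rho2 \<longleftrightarrow>
     C12 T rho1 \<and> C12 T rho2 \<and>
     (\<forall>t\<in>{0..<T}. \<forall>x. 0 \<le> rho1 t x + rho2 t x \<and> ereal (rho1 t x + rho2 t x) < rho_c g) \<and>
     (\<forall>t\<in>{0..<T}. \<forall>x.
        heat_eq_at rho1 (\<lambda>s y. flux g (rho1 s y) (rho1 s y + rho2 s y)) T t x \<and>
        heat_eq_at rho2 (\<lambda>s y. flux g (rho2 s y) (rho1 s y + rho2 s y)) T t x)"

definition admissible :: "(nat \<Rightarrow> real) \<Rightarrow> (real \<times> real) set" where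
  "admissible g = {(r1, r2). 0 < r1 \<and> 0 < r2 \<and> ereal (r1 + r2) < rho_c g}"

end

theory Submission
  imports Defs
begin


definition coef :: "(nat \<Rightarrow> real) \<Rightarrow> nat \<Rightarrow> real" where
  "coef g k = 1 / gfact g k"

lemma gfact_pos: assumes "\<forall>k\<ge>1. g k > 0" shows "gfact g k > 0"
  unfolding gfact_def using assms by (intro prod_pos) auto

lemma coef_pos: assumes "\<forall>k\<ge>1. g k > 0" shows "coef g k > 0"
  using gfact_pos[OF assms] by (simp add: coef_def)

lemma coef_0: "coef g 0 = 1" by (simp add: coef_def gfact_def)
lemma coef_1: "coef g 1 = 1 / g 1" by (simp add: coef_def gfact_def)

lemma Zg_eq: "Zg g = (\<lambda>x. \<Sum>n. coef g n * x ^ n)"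
  by (rule ext) (simp add: Zg_def coef_def)

lemma summ: assumes "ereal \<bar>x\<bar> < phi_star g" shows "summable (\<lambda>n. coef g n * x ^ n)"
  using summable_in_conv_radius[of x "coef g"] assms by (simp add: phi_star_def coef_def)

lemma between: assumes "ereal \<bar>x\<bar> < phi_star g"
  obtains K where "\<bar>x\<bar> < K" "ereal K < phi_star g"
  using assms ereal_dense2 by (metis ereal_less(2) less_ereal.simps(1))

lemma Z_deriv: assumes "ereal \<bar>x\<bar> < phi_star g"
  shows "(Zg g has_field_derivative (\<Sum>n. diffs (coef g) n * x ^ n)) (at x)"
proof -
  obtain K where K: "\<bar>x\<bar> < K" "ereal K < phi_star g" using between assms by blast
  have "summable (\<lambda>n. coef g n * K ^ n)" using K by (intro summ) auto
  from termdiffs_strong[OF this, of x] K show ?thesis by (simp add: Zg_eq)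
qed

lemma D_summ: assumes "ereal \<bar>x\<bar> < phi_star g"
  shows "summable (\<lambda>n. diffs (coef g) n * x ^ n)"
proof -
  obtain K where K: "\<bar>x\<bar> < K" "ereal K < phi_star g" using between assms by blast
  show ?thesis
    apply (rule termdiff_converges[of x K])
    using K apply simp
    apply (rule summ) using K(2) by (auto intro: order.strict_trans[of _ "ereal K"])
qed

lemma D_deriv: assumes "ereal \<bar>x\<bar> < phi_star g"
  shows "((\<lambda>x. \<Sum>n. diffs (coef g) n * x ^ n) has_field_derivative (\<Sum>n. diffs (diffs (coef g)) n * x ^ n)) (at x)"
proof -
  obtain K where K: "\<bar>x\<bar> < K" "ereal K < phi_star g" using between assms by blast
  have "summable (\<lambda>n. diffs (coef g) n * K ^ n)" using K by (intro D_summ) auto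
  from termdiffs_strong[OF this, of x] K show ?thesis by simp
qed



definition Ng :: "(nat \<Rightarrow> real) \<Rightarrow> real \<Rightarrow> real" where
  "Ng g x = (\<Sum>n. real n * coef g n * x ^ n)"

lemma N_facts: assumes "ereal \<bar>x\<bar> < phi_star g"
  shows "summable (\<lambda>n. real n * coef g n * x ^ n)"
    and "Ng g x = x * (\<Sum>n. diffs (coef g) n * x ^ n)"
proof -
  let ?f = "\<lambda>n. real n * coef g n * x ^ n"
  have eq: "(\<lambda>n. ?f (Suc n)) = (\<lambda>n. x * (diffs (coef g) n * x ^ n))"
    by (rule ext) (simp add: diffs_def)
  have s: "summable (\<lambda>n. ?f (Suc n))" unfolding eq using D_summ[OF assms] by (rule summable_mult)
  then show "summable ?f" using summable_Suc_iff[of ?f] by blast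
  then have h: "(\<Sum>n. ?f (Suc n)) = suminf ?f - ?f 0" by (rule suminf_split_head)
  then have "(\<Sum>n. ?f (Suc n)) = Ng g x" unfolding Ng_def by simp
  moreover have "(\<Sum>n. ?f (Suc n)) = x * (\<Sum>n. diffs (coef g) n * x ^ n)"
    unfolding eq using D_summ[OF assms] by (rule suminf_mult)
  ultimately show "Ng g x = x * (\<Sum>n. diffs (coef g) n * x ^ n)" by simp
qed

lemma R_eq: assumes "ereal \<bar>x\<bar> < phi_star g"
  shows "Rg g x = Ng g x / Zg g x"
  using DERIV_imp_deriv[OF Z_deriv[OF assms]] N_facts(2)[OF assms] by (simp add: Rg_def)

lemma Z_pos: assumes pos: "\<forall>k\<ge>1. g k > 0" and "ereal \<bar>x\<bar> < phi_star g" and "0 \<le> x"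
  shows "Zg g x > 0"
  unfolding Zg_eq
  apply (rule suminf_pos2[where i=0])
  using summ[OF assms(2)] apply simp
  subgoal for n using coef_pos[OF pos, of n] assms(3) by simp
  by (simp add: coef_0)

lemma Z_cont: assumes "ereal \<bar>x\<bar> < phi_star g" shows "isCont (Zg g) x"
  using Z_deriv[OF assms] DERIV_isCont by blast

lemma D_cont: assumes "ereal \<bar>x\<bar> < phi_star g"
  shows "isCont (\<lambda>x. \<Sum>n. diffs (coef g) n * x ^ n) x"
  using D_deriv[OF assms] DERIV_isCont by blast

lemma R_cont: assumes pos: "\<forall>k\<ge>1. g k > 0" and x: "ereal \<bar>x\<bar> < phi_star g" and "0 \<le> x"
  shows "isCont (Rg g) x"
proof -
  obtain K where K: "\<bar>x\<bar> < K" "ereal K < phi_star g" using between x by blast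
  have ev: "eventually (\<lambda>y. y \<in> {-K<..<K}) (nhds x)"
    using K by (intro eventually_nhds_in_open) auto
  have ev2: "eventually (\<lambda>y. Rg g y = y * (\<Sum>n. diffs (coef g) n * y ^ n) / Zg g y) (nhds x)"
  proof (rule eventually_mono[OF ev])
    fix y assume "y \<in> {-K<..<K}"
    then have "ereal \<bar>y\<bar> < phi_star g" using K(2)
      by (auto intro: order.strict_trans[of _ "ereal K"])
    then show "Rg g y = y * (\<Sum>n. diffs (coef g) n * y ^ n) / Zg g y"
      using R_eq N_facts(2) by simp
  qed
  have cont: "isCont (\<lambda>y. y * (\<Sum>n. diffs (coef g) n * y ^ n) / Zg g y) x"
    using Z_cont[OF x] D_cont[OF x] Z_pos[OF pos x assms(3)]
    by (intro continuous_intros) auto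
  show ?thesis using isCont_cong[OF ev2] cont by simp
qed

lemma G_nonneg:
  fixes a :: "nat \<Rightarrow> real" and p q :: real
  assumes "\<And>k. a k > 0" "0 \<le> p" "p \<le> q"
  shows "0 \<le> a k * a j * (real k - real j) * (q ^ k * p ^ j - p ^ k * q ^ j)"
proof (cases "j \<le> k")
  case True
  have "q ^ k * p ^ j - p ^ k * q ^ j = p ^ j * q ^ j * (q ^ (k - j) - p ^ (k - j))"
    using True by (simp add: algebra_simps flip: power_add)
  also have "\<dots> \<ge> 0" using assms by (intro mult_nonneg_nonneg power_mono) (auto intro: power_mono)
  finally show ?thesis using True assms(1)[of k] assms(1)[of j] by (intro mult_nonneg_nonneg) auto
next
  case False
  then have kj: "k \<le> j" by simp
  have "p ^ k * q ^ j - q ^ k * p ^ j = p ^ k * q ^ k * (q ^ (j - k) - p ^ (j - k))"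
    using kj by (simp add: algebra_simps flip: power_add)
  also have "\<dots> \<ge> 0" using assms by (intro mult_nonneg_nonneg power_mono) (auto intro: power_mono)
  finally have "0 \<le> (real j - real k) * (p ^ k * q ^ j - q ^ k * p ^ j)" using kj by simp
  then show ?thesis using assms(1)[of k] assms(1)[of j]
    by (metis (no_types, opaque_lifting) minus_diff_eq mult.assoc mult_minus_left mult_minus_right mult_nonneg_nonneg less_imp_le zero_less_mult_iff)
qed

lemma finite_ineq:
  fixes a :: "nat \<Rightarrow> real" and p q :: real
  assumes apos: "\<And>k. a k > 0" and pq: "0 \<le> p" "p < q" and M: "2 \<le> M"
  shows "a 0 * a 1 * (q - p) \<le> (\<Sum>k<M. real k * a k * q ^ k) * (\<Sum>j<M. a j * p ^ j)
             - (\<Sum>k<M. real k * a k * p ^ k) * (\<Sum>j<M. a j * q ^ j)"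
proof -
  define F where "F k j = real k * a k * a j * (q ^ k * p ^ j - p ^ k * q ^ j)" for k j
  define G where "G k j = a k * a j * (real k - real j) * (q ^ k * p ^ j - p ^ k * q ^ j)" for k j
  have S: "(\<Sum>k<M. real k * a k * q ^ k) * (\<Sum>j<M. a j * p ^ j)
             - (\<Sum>k<M. real k * a k * p ^ k) * (\<Sum>j<M. a j * q ^ j) = (\<Sum>k<M. \<Sum>j<M. F k j)"
  proof -
    have "(\<Sum>k<M. real k * a k * q ^ k) * (\<Sum>j<M. a j * p ^ j)
             - (\<Sum>k<M. real k * a k * p ^ k) * (\<Sum>j<M. a j * q ^ j) =
      (\<Sum>k<M. \<Sum>j<M. real k * a k * q ^ k * (a j * p ^ j)) - (\<Sum>k<M. \<Sum>j<M. real k * a k * p ^ k * (a j * q ^ j))"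
      by (simp only: sum_product)
    also have "\<dots> = (\<Sum>k<M. \<Sum>j<M. real k * a k * q ^ k * (a j * p ^ j) - real k * a k * p ^ k * (a j * q ^ j))"
      by (simp only: sum_subtractf)
    also have "\<dots> = (\<Sum>k<M. \<Sum>j<M. F k j)" by (simp add: F_def algebra_simps)
    finally show ?thesis .
  qed
  have sw: "(\<Sum>k<M. \<Sum>j<M. F k j) = (\<Sum>k<M. \<Sum>j<M. F j k)" by (rule sum.swap)
  have h2: "2 * (\<Sum>k<M. \<Sum>j<M. F k j) = (\<Sum>k<M. \<Sum>j<M. G k j)"
    apply (subst mult_2, subst (2) sw)
    by (simp add: sum.distrib[symmetric] F_def G_def algebra_simps)
  have Gn: "0 \<le> G k j" for k j unfolding G_def by (rule G_nonneg[OF apos pq(1) less_imp_le[OF pq(2)]])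
  have g1: "(\<Sum>j<M. G 1 j) \<ge> G 1 0"
    using M Gn by (intro member_le_sum) auto
  have g0: "(\<Sum>j<M. G 0 j) \<ge> G 0 1"
    using M Gn by (intro member_le_sum) auto
  have gs: "(\<Sum>k<M. \<Sum>j<M. G k j) \<ge> (\<Sum>k\<in>{0,1}. \<Sum>j<M. G k j)"
    using M Gn by (intro sum_mono2 sum_nonneg) auto
  have gv: "G 1 0 = a 0 * a 1 * (q - p)" "G 0 1 = a 0 * a 1 * (q - p)" by (auto simp: G_def algebra_simps)
  show ?thesis using S h2 g1 g0 gs gv by simp
qed



lemma R_strict: assumes pos: "\<forall>k\<ge>1. g k > 0" and pq: "0 \<le> p" "p < q" and q: "ereal q < phi_star g"
  shows "Rg g p < Rg g q"
proof -
  have qa: "ereal \<bar>q\<bar> < phi_star g" using pq q by simp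
  have pa: "ereal \<bar>p\<bar> < phi_star g" using pq q by (auto intro: order.strict_trans[of _ "ereal q"])
  let ?a = "coef g"
  have lim: "(\<lambda>M. (\<Sum>k<M. real k * ?a k * q ^ k) * (\<Sum>j<M. ?a j * p ^ j)
             - (\<Sum>k<M. real k * ?a k * p ^ k) * (\<Sum>j<M. ?a j * q ^ j))
      \<longlonglongrightarrow> Ng g q * Zg g p - Ng g p * Zg g q"
    unfolding Ng_def Zg_eq
    by (intro tendsto_diff tendsto_mult summable_LIMSEQ N_facts(1) summ qa pa)
  have "coef g 0 * coef g 1 * (q - p) \<le> Ng g q * Zg g p - Ng g p * Zg g q"
    apply (rule LIMSEQ_le_const[OF lim])
    apply (rule exI[of _ 2])
    using finite_ineq[of ?a p q] coef_pos[OF pos] pq by auto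
  moreover have "coef g 0 * coef g 1 * (q - p) > 0" using coef_pos[OF pos] pq by simp
  ultimately have ineq: "Ng g p * Zg g q < Ng g q * Zg g p" by simp
  have zp: "Zg g p > 0" using Z_pos[OF pos pa pq(1)] .
  have zq: "Zg g q > 0" using Z_pos[OF pos qa] pq by simp
  show ?thesis unfolding R_eq[OF pa] R_eq[OF qa] using zp zq ineq
    by (simp add: divide_simps mult.commute)
qed

lemma R0: "Rg g 0 = 0" by (simp add: Rg_def)

lemma dom_iff: "x \<in> fug_dom g \<longleftrightarrow> 0 \<le> x \<and> ereal x < phi_star g"
  by (simp add: fug_dom_def)

lemma R_inj: assumes pos: "\<forall>k\<ge>1. g k > 0" and "x \<in> fug_dom g" "y \<in> fug_dom g" "Rg g x = Rg g y"
  shows "x = y"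
proof (rule ccontr)
  assume "x \<noteq> y"
  then consider "x < y" | "y < x" by linarith
  then show False
  proof cases
    case 1 then show ?thesis using R_strict[OF pos, of x y] assms by (auto simp: dom_iff)
  next
    case 2 then show ?thesis using R_strict[OF pos, of y x] assms by (auto simp: dom_iff)
  qed
qed

lemma Phi_props: assumes pos: "\<forall>k\<ge>1. g k > 0" and r: "0 \<le> r" "ereal r < rho_c g"
  shows "Phig g r \<in> fug_dom g \<and> Rg g (Phig g r) = r"
proof -
  obtain p where p: "p \<in> fug_dom g" "ereal r < ereal (Rg g p)"
    using r(2) unfolding rho_c_def by (auto simp: less_SUP_iff)
  have "\<exists>x. 0 \<le> x \<and> x \<le> p \<and> Rg g x = r"
  proof (rule IVT)
    show "Rg g 0 \<le> r" using r by (simp add: R0)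
    show "r \<le> Rg g p" using p by simp
    show "0 \<le> p" using p by (simp add: dom_iff)
    show "\<forall>x. 0 \<le> x \<and> x \<le> p \<longrightarrow> isCont (Rg g) x"
    proof (intro allI impI)
      fix x assume x: "0 \<le> x \<and> x \<le> p"
      then have "ereal \<bar>x\<bar> < phi_star g" using p(1) by (auto simp: dom_iff intro: le_less_trans[of _ "ereal p"])
      then show "isCont (Rg g) x" using R_cont[OF pos] x by simp
    qed
  qed
  then obtain x where x0: "0 \<le> x" "x \<le> p" "Rg g x = r" by blast
  have x: "x \<in> fug_dom g" "Rg g x = r"
    using p(1) x0 by (auto simp: dom_iff intro: le_less_trans[of _ "ereal p"])
  have "\<exists>!x. x \<in> fug_dom g \<and> Rg g x = r"
    using x R_inj[OF pos] by blast
  from theI'[OF this] show ?thesis unfolding Phig_def .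
qed

lemma Phi_mono: assumes pos: "\<forall>k\<ge>1. g k > 0" and r: "0 \<le> r1" "r1 \<le> r2" "ereal r2 < rho_c g"
  shows "Phig g r1 \<le> Phig g r2"
proof (rule ccontr)
  assume "\<not> ?thesis"
  then have lt: "Phig g r2 < Phig g r1" by simp
  have r1: "ereal r1 < rho_c g" using r by (auto intro: le_less_trans[of _ "ereal r2"])
  have A: "Phig g r1 \<in> fug_dom g \<and> Rg g (Phig g r1) = r1" using Phi_props[OF pos r(1) r1] .
  have B: "Phig g r2 \<in> fug_dom g \<and> Rg g (Phig g r2) = r2" using Phi_props[OF pos _ r(3)] r by simp
  have "Rg g (Phig g r2) < Rg g (Phig g r1)"
    using R_strict[OF pos _ lt] A B by (auto simp: dom_iff)
  then show False using A B r by simp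
qed



lemma second_deriv_max:
  fixes f f' :: "real \<Rightarrow> real"
  assumes d1: "\<And>h. (f has_real_derivative f' h) (at h)"
    and d2: "(f' has_real_derivative d) (at 0)"
    and mx: "\<And>h. f h \<le> f 0"
  shows "d \<le> 0"
proof (rule ccontr)
  assume "\<not> d \<le> 0"
  then have dpos: "0 < d" by simp
  have f'0: "f' 0 = 0"
    using DERIV_local_max[OF d1[of 0], of 1] mx by auto
  obtain \<delta> where \<delta>: "\<delta> > 0" "\<And>h. h > 0 \<Longrightarrow> h < \<delta> \<Longrightarrow> f' 0 < f' (0 + h)"
    using DERIV_pos_inc_right[OF d2 dpos] by blast
  have "\<delta>/2 > 0" using \<delta> by simp
  obtain z where z: "0 < z" "z < \<delta>/2" "f (\<delta>/2) - f 0 = (\<delta>/2 - 0) * f' z"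
    using MVT2[OF \<open>\<delta>/2 > 0\<close>, of f f'] d1 by blast
  have "f' z > 0" using \<delta>(2)[of z] z f'0 by simp
  then have "(\<delta>/2 - 0) * f' z > 0" using \<delta> by simp
  then have "f (\<delta>/2) - f 0 > 0" using z(3) by linarith
  then show False using mx[of "\<delta>/2"] by simp
qed

lemma per_nat: assumes "periodic_fun f" shows "f (x + real n *\<^sub>R axis j 1) = f x"
proof (induction n)
  case 0 then show ?case by simp
next
  case (Suc n)
  have "x + real (Suc n) *\<^sub>R axis j 1 = (x + real n *\<^sub>R axis j 1) + axis j 1"
    by (simp add: algebra_simps)
  then show ?case using assms Suc unfolding periodic_fun_def by metis
qed

lemma per_int: assumes "periodic_fun f" shows "f (x + of_int k *\<^sub>R axis j 1) = f x"
proof (cases "k \<ge> 0")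
  case True
  have "f (x + real (nat k) *\<^sub>R axis j 1) = f x" by (rule per_nat[OF assms])
  moreover have "real (nat k) = of_int k" using True by simp
  ultimately show ?thesis by metis
next
  case False
  have k: "real (nat (-k)) = - of_int k" using False by simp
  have "f ((x + of_int k *\<^sub>R axis j 1) + real (nat (-k)) *\<^sub>R axis j 1) = f (x + of_int k *\<^sub>R axis j 1)"
    by (rule per_nat[OF assms])
  moreover have "(x + of_int k *\<^sub>R axis j 1) + (- of_int k) *\<^sub>R axis j 1 = x"
    by (simp add: algebra_simps)
  ultimately show ?thesis unfolding k by metis
qed

lemma per_sum: assumes "periodic_fun f" "finite S"
  shows "f (x + (\<Sum>j\<in>S. of_int (k j) *\<^sub>R axis j 1)) = f x"
  using assms(2)
proof (induction S rule: finite_induct)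
  case empty then show ?case by simp
next
  case (insert i S)
  have "x + (\<Sum>j\<in>insert i S. of_int (k j) *\<^sub>R axis j 1) =
        (x + (\<Sum>j\<in>S. of_int (k j) *\<^sub>R axis j 1)) + of_int (k i) *\<^sub>R axis i 1"
    using insert by (simp add: algebra_simps)
  then show ?case using per_int[OF assms(1), of "x + (\<Sum>j\<in>S. of_int (k j) *\<^sub>R axis j 1)" "k i" i] insert.IH by metis
qed

lemma sum_axis_comp: "(\<Sum>j\<in>UNIV. (c j::real) *\<^sub>R axis j (1::real)) $ i = c i"
proof -
  have "(\<Sum>j\<in>UNIV. c j *\<^sub>R axis j (1::real)) $ i = (\<Sum>j\<in>UNIV. c j * (axis j (1::real) $ i))" by simp
  also have "\<dots> = (\<Sum>j\<in>UNIV. if j = i then c j else 0)" by (rule sum.cong) (auto simp: axis_def)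
  also have "\<dots> = c i" by simp
  finally show ?thesis .
qed

lemma per_cube: assumes "periodic_fun (f :: real^'d \<Rightarrow> 'b)"
  shows "\<exists>y\<in>cbox (vec 0) (vec 1). f y = f x"
proof -
  define y where "y = x + (\<Sum>j\<in>UNIV. of_int (- \<lfloor>x$j\<rfloor>) *\<^sub>R axis j (1::real))"
  have "f y = f x" unfolding y_def by (rule per_sum[OF assms]) simp
  moreover have "y $ i = x $ i - of_int \<lfloor>x$i\<rfloor>" for i
  proof -
    have "(\<Sum>j\<in>UNIV. of_int (- \<lfloor>x$j\<rfloor>) *\<^sub>R axis j (1::real)) $ i = of_int (- \<lfloor>x$i\<rfloor>)"
      by (rule sum_axis_comp)
    then show ?thesis unfolding y_def by simp
  qed
  then have "y \<in> cbox (vec 0) (vec 1)"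
    unfolding mem_box_cart
    apply simp
    apply (intro allI)
    subgoal for i using floor_correct[of "x$i"] by linarith
    done
  ultimately show ?thesis by blast
qed



lemma max_principle:
  fixes u :: "real \<Rightarrow> real^'d \<Rightarrow> real"
  assumes cont: "continuous_on ({0..<T} \<times> UNIV) (\<lambda>(t,x). u t x)"
    and per: "\<forall>t\<in>{0..<T}. periodic_fun (u t)"
    and M: "\<And>x. u 0 x \<le> M"
    and key: "\<And>t x. 0 < t \<Longrightarrow> t < T \<Longrightarrow> (\<forall>y. u t y \<le> u t x) \<Longrightarrow>
        \<exists>D. ((\<lambda>\<tau>. u \<tau> x) has_real_derivative D) (at t within {0..<T}) \<and> D \<le> 0"
    and t: "t \<in> {0..<T}"
  shows "u t x \<le> M"
proof (rule ccontr)
  assume "\<not> u t x \<le> M"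
  then have big: "u t x > M" by simp
  have t0: "t > 0" using big M[of x] t by (cases "t = 0") auto
  define \<epsilon> where "\<epsilon> = (u t x - M) / (2 * t)"
  have \<epsilon>: "\<epsilon> > 0" using big t0 by (simp add: \<epsilon>_def)
  have big2: "u t x - \<epsilon> * t > M" using big t0 by (simp add: \<epsilon>_def field_simps)
  define K where "K = {0..t} \<times> cbox (vec 0) (vec (1::real) :: real^'d)"
  define v where "v = (\<lambda>p. (\<lambda>(t,x). u t x) p - \<epsilon> * fst p)"
  have Ksub: "K \<subseteq> {0..<T} \<times> UNIV" using t by (auto simp: K_def)
  have "continuous_on K v" unfolding v_def
    by (intro continuous_intros continuous_on_subset[OF cont Ksub])
  moreover have "compact K" unfolding K_def by (intro compact_Times compact_Icc compact_cbox)
  moreover have "(0, vec 0) \<in> K" unfolding K_def mem_Times_iff mem_box_cart using t0 by simp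
  then have "K \<noteq> {}" by blast
  ultimately obtain p where p: "p \<in> K" "\<forall>q\<in>K. v q \<le> v p"
    using continuous_attains_sup by blast
  obtain t1 x1 where p_eq: "p = (t1, x1)" by (cases p)
  have t1: "0 \<le> t1" "t1 \<le> t" using p(1) by (auto simp: K_def p_eq)
  have all: "u s y - \<epsilon> * s \<le> u t1 x1 - \<epsilon> * t1" if s: "0 \<le> s" "s \<le> t" for s y
  proof -
    have "periodic_fun (u s)" using per s t by auto
    then obtain y' where y': "y' \<in> cbox (vec 0) (vec 1)" "u s y' = u s y" using per_cube by metis
    have "(s, y') \<in> K" using s y' by (auto simp: K_def)
    then have "v (s, y') \<le> v p" using p by blast
    then show ?thesis using y' by (simp add: v_def p_eq)
  qed
  have hi: "u t1 x1 - \<epsilon> * t1 > M" using all[of t x] t0 big2 by simp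
  have t1pos: "t1 > 0"
  proof (rule ccontr)
    assume "\<not> t1 > 0"
    then have "t1 = 0" using t1 by simp
    then show False using hi M[of x1] by simp
  qed
  have t1T: "t1 < T" using t1 t by simp
  have smax: "\<forall>y. u t1 y \<le> u t1 x1" using all[of t1] t1 by simp
  obtain D where D: "((\<lambda>\<tau>. u \<tau> x1) has_real_derivative D) (at t1 within {0..<T})" "D \<le> 0"
    using key[OF t1pos t1T smax] by blast
  have "((\<lambda>\<tau>. u \<tau> x1) has_real_derivative D) (at t1 within {0..t1})"
    using D(1) by (rule DERIV_subset) (use t1T in auto)
  then have lim: "((\<lambda>y. (u y x1 - u t1 x1) / (y - t1)) \<longlongrightarrow> D) (at_left t1)"
    unfolding has_field_derivative_iff at_within_Icc_at_left[OF t1pos] .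
  have ev: "eventually (\<lambda>y. \<epsilon> \<le> (u y x1 - u t1 x1) / (y - t1)) (at_left t1)"
    unfolding at_within_Icc_at_left[OF t1pos, symmetric] eventually_at_filter
  proof (rule always_eventually, intro allI impI)
    fix y assume y: "y \<noteq> t1" "y \<in> {0..t1}"
    then have "y < t1" by simp
    have "u y x1 - \<epsilon> * y \<le> u t1 x1 - \<epsilon> * t1" using all[of y x1] y t1 by simp
    then have "u y x1 - u t1 x1 \<le> \<epsilon> * (y - t1)" by (simp add: algebra_simps)
    then show "\<epsilon> \<le> (u y x1 - u t1 x1) / (y - t1)" using \<open>y < t1\<close>
      by (simp add: pos_le_divide_eq neg_le_divide_eq)
  qed
  have "\<epsilon> \<le> D" using tendsto_lowerbound[OF lim ev] by simp
  then show False using D(2) \<epsilon> by simp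
qed



lemma line_deriv:
  fixes w :: "real^'d \<Rightarrow> real"
  assumes "\<forall>y. ((\<lambda>h. w (y + h *\<^sub>R e)) has_real_derivative Dw y) (at 0)"
  shows "((\<lambda>h. w (x + h *\<^sub>R e)) has_real_derivative Dw (x + h *\<^sub>R e)) (at h)"
proof -
  have "((\<lambda>h'. w ((x + h *\<^sub>R e) + h' *\<^sub>R e)) has_real_derivative Dw (x + h *\<^sub>R e)) (at 0)"
    using assms by blast
  moreover have "(\<lambda>h'. w ((x + h *\<^sub>R e) + h' *\<^sub>R e)) = (\<lambda>h'. (\<lambda>h. w (x + h *\<^sub>R e)) (h' + h))"
    by (rule ext) (simp add: algebra_simps)
  ultimately show ?thesis using DERIV_shift[of "\<lambda>h. w (x + h *\<^sub>R e)" "Dw (x + h *\<^sub>R e)" 0 h] by simp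
qed

lemma combo:
  fixes f1 f2 w1 w2 :: "real \<Rightarrow> real^'d \<Rightarrow> real"
  assumes h1: "heat_eq_at f1 w1 T t x" and h2: "heat_eq_at f2 w2 T t x"
    and mx: "\<forall>y. \<alpha> * w1 t y + \<beta> * w2 t y \<le> \<alpha> * w1 t x + \<beta> * w2 t x"
  shows "\<exists>D1 D2. ((\<lambda>s. f1 s x) has_real_derivative D1) (at t within {0..<T}) \<and>
                 ((\<lambda>s. f2 s x) has_real_derivative D2) (at t within {0..<T}) \<and> \<alpha> * D1 + \<beta> * D2 \<le> 0"
proof -
  obtain ft1 Dw1 D2w1 where A:
    "((\<lambda>s. f1 s x) has_real_derivative ft1) (at t within {0..<T})"
    "\<forall>j y. ((\<lambda>h. w1 t (y + h *\<^sub>R axis j 1)) has_real_derivative Dw1 j y) (at 0)"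
    "\<forall>j. ((\<lambda>h. Dw1 j (x + h *\<^sub>R axis j 1)) has_real_derivative D2w1 j) (at 0)"
    "ft1 = (\<Sum>j\<in>UNIV. D2w1 j)"
    using h1 unfolding heat_eq_at_def by blast
  obtain ft2 Dw2 D2w2 where B:
    "((\<lambda>s. f2 s x) has_real_derivative ft2) (at t within {0..<T})"
    "\<forall>j y. ((\<lambda>h. w2 t (y + h *\<^sub>R axis j 1)) has_real_derivative Dw2 j y) (at 0)"
    "\<forall>j. ((\<lambda>h. Dw2 j (x + h *\<^sub>R axis j 1)) has_real_derivative D2w2 j) (at 0)"
    "ft2 = (\<Sum>j\<in>UNIV. D2w2 j)"
    using h2 unfolding heat_eq_at_def by blast
  have each: "\<alpha> * D2w1 j + \<beta> * D2w2 j \<le> 0" for j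
  proof (rule second_deriv_max[where f = "\<lambda>h. \<alpha> * w1 t (x + h *\<^sub>R axis j 1) + \<beta> * w2 t (x + h *\<^sub>R axis j 1)"
        and f' = "\<lambda>h. \<alpha> * Dw1 j (x + h *\<^sub>R axis j 1) + \<beta> * Dw2 j (x + h *\<^sub>R axis j 1)"])
    fix h
    show "((\<lambda>h. \<alpha> * w1 t (x + h *\<^sub>R axis j 1) + \<beta> * w2 t (x + h *\<^sub>R axis j 1)) has_real_derivative
        \<alpha> * Dw1 j (x + h *\<^sub>R axis j 1) + \<beta> * Dw2 j (x + h *\<^sub>R axis j 1)) (at h)"
      using A(2) B(2) by (intro DERIV_add DERIV_cmult line_deriv) auto
  next
    show "((\<lambda>h. \<alpha> * Dw1 j (x + h *\<^sub>R axis j 1) + \<beta> * Dw2 j (x + h *\<^sub>R axis j 1)) has_real_derivative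
        \<alpha> * D2w1 j + \<beta> * D2w2 j) (at 0)"
      using A(3) B(3) by (intro DERIV_add DERIV_cmult) auto
  next
    fix h
    show "\<alpha> * w1 t (x + h *\<^sub>R axis j 1) + \<beta> * w2 t (x + h *\<^sub>R axis j 1)
        \<le> \<alpha> * w1 t (x + 0 *\<^sub>R axis j 1) + \<beta> * w2 t (x + 0 *\<^sub>R axis j 1)"
      using mx by simp
  qed
  have "\<alpha> * ft1 + \<beta> * ft2 = (\<Sum>j\<in>UNIV. \<alpha> * D2w1 j + \<beta> * D2w2 j)"
    using A(4) B(4) by (simp add: sum.distrib sum_distrib_left)
  also have "\<dots> \<le> 0" using each by (intro sum_nonpos) auto
  finally show ?thesis using A(1) B(1) by blast
qed

lemma per_max: assumes "periodic_fun (f :: real^'d \<Rightarrow> real)" "continuous_on UNIV f"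
  shows "\<exists>x0. \<forall>x. f x \<le> f x0"
proof -
  have "vec 0 \<in> cbox (vec 0) (vec (1::real) :: real^'d)" unfolding mem_box_cart by simp
  then obtain x0 where x0: "x0 \<in> cbox (vec 0) (vec (1::real) :: real^'d)" "\<forall>y\<in>cbox (vec 0) (vec 1). f y \<le> f x0"
    using continuous_attains_sup[OF compact_cbox _ continuous_on_subset[OF assms(2)]] by blast
  show ?thesis
  proof (intro exI allI)
    fix x obtain y where "y \<in> cbox (vec 0) (vec 1)" "f y = f x" using per_cube[OF assms(1)] by metis
    then show "f x \<le> f x0" using x0 by metis
  qed
qed

lemma per_min: assumes "periodic_fun (f :: real^'d \<Rightarrow> real)" "continuous_on UNIV f"
  shows "\<exists>x0. \<forall>x. f x0 \<le> f x"
proof -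
  have "periodic_fun (\<lambda>x. - f x)" using assms(1) by (simp add: periodic_fun_def)
  moreover have "continuous_on UNIV (\<lambda>x. - f x)" using assms(2) by (intro continuous_intros)
  ultimately obtain x0 where "\<forall>x. - f x \<le> - f x0" using per_max by blast
  then show ?thesis by auto
qed



lemma cont_add2:
  fixes a b :: "real \<Rightarrow> 'x::topological_space \<Rightarrow> real"
  assumes "continuous_on S (\<lambda>(t,x). a t x)" "continuous_on S (\<lambda>(t,x). b t x)"
  shows "continuous_on S (\<lambda>(t,x). a t x + b t x)"
proof -
  have "(\<lambda>(t,x). a t x + b t x) = (\<lambda>p. (\<lambda>(t,x). a t x) p + (\<lambda>(t,x). b t x) p)" by auto
  then show ?thesis using continuous_on_add[OF assms] by simp
qed

lemma cont_div2:
  fixes a b :: "real \<Rightarrow> 'x::topological_space \<Rightarrow> real"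
  assumes "continuous_on S (\<lambda>(t,x). a t x)" "continuous_on S (\<lambda>(t,x). b t x)"
    and "\<forall>(t,x)\<in>S. b t x \<noteq> 0"
  shows "continuous_on S (\<lambda>(t,x). a t x / b t x)"
proof -
  have "(\<lambda>(t,x). a t x / b t x) = (\<lambda>p. (\<lambda>(t,x). a t x) p / (\<lambda>(t,x). b t x) p)" by auto
  moreover have "\<forall>p\<in>S. (\<lambda>(t,x). b t x) p \<noteq> 0" using assms(3) by auto
  ultimately show ?thesis using continuous_on_divide[OF assms(1,2)] by simp
qed

lemma cont_neg2:
  fixes a b :: "real \<Rightarrow> 'x::topological_space \<Rightarrow> real"
  assumes "continuous_on S (\<lambda>(t,x). a t x)"
  shows "continuous_on S (\<lambda>(t,x). - a t x)"
proof -
  have "(\<lambda>(t,x). - a t x) = (\<lambda>p. - (\<lambda>(t,x). a t x) p)" by auto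
  then show ?thesis using continuous_on_minus[OF assms] by simp
qed

lemma fl_alg: "(1 - c) * (a * P / S) + (- c) * (b * P / (S::real)) = (a - c * (a + b)) * (P / S)"
proof -
  show ?thesis
  proof (cases "S = 0")
    case True then show ?thesis by simp
  next
    case False then show ?thesis by (simp add: field_simps)
  qed
qed

lemma conc_bound:
  fixes ra rb :: "real \<Rightarrow> real^'d \<Rightarrow> real"
  assumes conta: "continuous_on ({0..<T} \<times> UNIV) (\<lambda>(t,x). ra t x)"
    and contb: "continuous_on ({0..<T} \<times> UNIV) (\<lambda>(t,x). rb t x)"
    and pera: "\<forall>t\<in>{0..<T}. periodic_fun (ra t)"
    and perb: "\<forall>t\<in>{0..<T}. periodic_fun (rb t)"
    and spos: "\<forall>t\<in>{0..<T}. \<forall>x. ra t x + rb t x > 0"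
    and phinn: "\<forall>t\<in>{0..<T}. \<forall>x. Phig g (ra t x + rb t x) \<ge> 0"
    and hea: "\<forall>t\<in>{0..<T}. \<forall>x. heat_eq_at ra (\<lambda>s y. flux g (ra s y) (ra s y + rb s y)) T t x"
    and heb: "\<forall>t\<in>{0..<T}. \<forall>x. heat_eq_at rb (\<lambda>s y. flux g (rb s y) (ra s y + rb s y)) T t x"
    and M: "\<And>x. ra 0 x / (ra 0 x + rb 0 x) \<le> M"
    and t: "t \<in> {0..<T}"
  shows "ra t x / (ra t x + rb t x) \<le> M"
proof (rule max_principle[where u = "\<lambda>t x. ra t x / (ra t x + rb t x)", OF _ _ M _ t])
  show "continuous_on ({0..<T} \<times> UNIV) (\<lambda>(t, x). ra t x / (ra t x + rb t x))"
    using spos by (intro cont_div2 cont_add2 conta contb) (auto simp: less_imp_neq[symmetric])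
  show "\<forall>t\<in>{0..<T}. periodic_fun (\<lambda>x. ra t x / (ra t x + rb t x))"
    using pera perb by (simp add: periodic_fun_def)
next
  fix t x assume t0: "0 < t" "t < T" and mx: "\<forall>y. ra t y / (ra t y + rb t y) \<le> ra t x / (ra t x + rb t x)"
  have tin: "t \<in> {0..<T}" using t0 by simp
  define S where "S y = ra t y + rb t y" for y
  define c0 where "c0 = ra t x / S x"
  have Sp: "S y > 0" for y using spos tin by (simp add: S_def)
  have mx2: "\<forall>y. (1 - c0) * flux g (ra t y) (ra t y + rb t y) + (- c0) * flux g (rb t y) (ra t y + rb t y)
        \<le> (1 - c0) * flux g (ra t x) (ra t x + rb t x) + (- c0) * flux g (rb t x) (ra t x + rb t x)"
  proof
    fix y
    have fl: "(1 - c0) * flux g (ra t z) (ra t z + rb t z) + (- c0) * flux g (rb t z) (ra t z + rb t z)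
        = (ra t z - c0 * S z) * (Phig g (S z) / S z)" for z
    proof -
      have f1: "flux g (ra t z) (ra t z + rb t z) = ra t z * Phig g (S z) / S z"
        using Sp[of z] by (simp add: flux_def S_def)
      have f2: "flux g (rb t z) (ra t z + rb t z) = rb t z * Phig g (S z) / S z"
        using Sp[of z] by (simp add: flux_def S_def)
      show ?thesis unfolding f1 f2 fl_alg by (simp add: S_def)
    qed
    have "ra t y / S y \<le> c0" using mx by (simp add: S_def c0_def)
    then have "ra t y - c0 * S y \<le> 0" using Sp[of y] by (simp add: divide_le_eq algebra_simps)
    moreover have "Phig g (S y) / S y \<ge> 0" using phinn tin Sp[of y] by (simp add: S_def)
    ultimately have "(ra t y - c0 * S y) * (Phig g (S y) / S y) \<le> 0" by (rule mult_nonpos_nonneg)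
    moreover have "ra t x - c0 * S x = 0" using Sp[of x] by (simp add: c0_def)
    ultimately show "(1 - c0) * flux g (ra t y) (ra t y + rb t y) + (- c0) * flux g (rb t y) (ra t y + rb t y)
        \<le> (1 - c0) * flux g (ra t x) (ra t x + rb t x) + (- c0) * flux g (rb t x) (ra t x + rb t x)"
      unfolding fl by simp
  qed
  obtain D1 D2 where D: "((\<lambda>s. ra s x) has_real_derivative D1) (at t within {0..<T})"
      "((\<lambda>s. rb s x) has_real_derivative D2) (at t within {0..<T})" "(1 - c0) * D1 + (- c0) * D2 \<le> 0"
    using combo[OF hea[rule_format, OF tin] heb[rule_format, OF tin] mx2] by auto
  have der: "((\<lambda>s. ra s x / (ra s x + rb s x)) has_real_derivative
      (D1 * (ra t x + rb t x) - ra t x * (D1 + D2)) / ((ra t x + rb t x) * (ra t x + rb t x))) (at t within {0..<T})"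
    using Sp[of x] by (intro DERIV_divide DERIV_add D(1,2)) (auto simp: S_def)
  have "D1 * (ra t x + rb t x) - ra t x * (D1 + D2) = S x * ((1 - c0) * D1 + (- c0) * D2)"
  proof -
    have sc: "S x * c0 = ra t x" using Sp[of x] by (simp add: c0_def)
    have "S x * ((1 - c0) * D1 + (- c0) * D2) = S x * D1 - (S x * c0) * (D1 + D2)" by (simp add: algebra_simps)
    then show ?thesis using sc by (simp add: S_def)
  qed
  also have "\<dots> \<le> 0" using Sp[of x] D(3) by (simp add: mult_nonneg_nonpos)
  finally have "(D1 * (ra t x + rb t x) - ra t x * (D1 + D2)) / ((ra t x + rb t x) * (ra t x + rb t x)) \<le> 0"
    by (simp add: divide_nonpos_nonneg)
  then show "\<exists>D. ((\<lambda>\<tau>. ra \<tau> x / (ra \<tau> x + rb \<tau> x)) has_real_derivative D) (at t within {0..<T}) \<and> D \<le> 0"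
    using der by blast
qed



lemma C12_basic: "C12 T f \<Longrightarrow> (\<forall>t\<in>{0..<T}. periodic_fun (f t)) \<and> continuous_on ({0..<T} \<times> UNIV) (\<lambda>(t,x). f t x)"
  by (auto simp: C12_def)

lemma W_val: "flux g a (a+b) + flux g b (a+b) = (if a + b = 0 then 0 else Phig g (a+b))"
proof (cases "a + b = 0")
  case True
  then have "g 1 * a + g 1 * b = 0" by (simp add: distrib_left[symmetric])
  then show ?thesis using True by (simp add: flux_def)
next
  case False
    have "a * Phig g (a + b) / (a + b) + b * Phig g (a + b) / (a + b) = (a * Phig g (a + b) + b * Phig g (a + b)) / (a + b)"
      by (rule add_divide_distrib[symmetric])
    also have "\<dots> = Phig g (a + b)" using False by (simp add: distrib_right[symmetric])
    finally show ?thesis using False by (simp add: flux_def)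
qed

lemma Psi_mono: assumes pos: "\<forall>k\<ge>1. g k > 0" and r: "0 \<le> r1" "r1 \<le> r2" "ereal r2 < rho_c g"
  shows "(if r1 = 0 then 0 else Phig g r1) \<le> (if r2 = 0 then 0 else Phig g r2)"
proof -
  have nn: "0 \<le> Phig g r2" using Phi_props[OF pos _ r(3)] r by (auto simp: dom_iff)
  show ?thesis
  proof (cases "r1 = 0")
    case True then show ?thesis using nn by simp
  next
    case False then show ?thesis using Phi_mono[OF pos r] r by simp
  qed
qed

lemma adm_open: "open (admissible g)"
proof -
  have "admissible g = {p. 0 < fst p} \<inter> {p. 0 < snd p} \<inter> {p. ereal (fst p + snd p) < rho_c g}"
    by (auto simp: admissible_def)
  moreover have "open {p::real\<times>real. 0 < fst p}" by (intro open_Collect_less continuous_intros)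
  moreover have "open {p::real\<times>real. 0 < snd p}" by (intro open_Collect_less continuous_intros)
  moreover have "open {p::real\<times>real. ereal (fst p + snd p) < rho_c g}"
    by (intro open_Collect_less continuous_intros)
  ultimately show ?thesis by auto
qed

lemma adm_dist:
  assumes m: "0 < m" and R: "Ms < R" "ereal R < rho_c g" and ne: "admissible g \<noteq> {}"
  shows "\<exists>\<delta>>0. \<forall>p. m \<le> fst p \<longrightarrow> m \<le> snd p \<longrightarrow> fst p + snd p \<le> Ms \<longrightarrow>
            infdist p (frontier (admissible g)) > \<delta>"
proof -
  define b where "b = min m ((R - Ms) / 2)"
  have b: "b > 0" using m R by (simp add: b_def)
  have fne: "frontier (admissible g) \<noteq> {}"
  proof (rule frontier_not_empty[OF ne])
    show "admissible g \<noteq> UNIV" by (auto simp: admissible_def)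
  qed
  have "\<forall>p. m \<le> fst p \<longrightarrow> m \<le> snd p \<longrightarrow> fst p + snd p \<le> Ms \<longrightarrow>
            infdist p (frontier (admissible g)) > b / 2"
  proof (intro allI impI)
    fix p :: "real \<times> real" assume p: "m \<le> fst p" "m \<le> snd p" "fst p + snd p \<le> Ms"
    have "b \<le> dist p y" if y: "y \<in> frontier (admissible g)" for y
    proof -
      have "y \<notin> admissible g"
        using y adm_open[of g] by (simp add: frontier_def interior_open)
      then have "fst y \<le> 0 \<or> snd y \<le> 0 \<or> \<not> ereal (fst y + snd y) < rho_c g"
        by (cases y) (auto simp: admissible_def)
      moreover have d1: "\<bar>fst p - fst y\<bar> \<le> dist p y" using dist_fst_le[of p y] by (simp add: dist_real_def)
      moreover have d2: "\<bar>snd p - snd y\<bar> \<le> dist p y" using dist_snd_le[of p y] by (simp add: dist_real_def)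
      ultimately consider "fst y \<le> 0" | "snd y \<le> 0" | "R \<le> fst y + snd y"
        using R(2) by (metis ereal_less(1) le_less_linear less_ereal.simps(1) order.strict_trans)
      then show ?thesis
      proof cases
        case 1
        then have "m \<le> dist p y" using d1 p by linarith
        then show ?thesis by (simp add: b_def)
      next
        case 2
        then have "m \<le> dist p y" using d2 p by linarith
        then show ?thesis by (simp add: b_def)
      next
        case 3
        then have "(fst y - fst p) + (snd y - snd p) \<ge> R - Ms" using p by linarith
        then have "(R - Ms) / 2 \<le> fst y - fst p \<or> (R - Ms) / 2 \<le> snd y - snd p"
        proof (cases "(R - Ms) / 2 \<le> fst y - fst p")
          case True then show ?thesis by blast
        next
          case False
          have "(R - Ms) / 2 \<le> snd y - snd p" using False \<open>(fst y - fst p) + (snd y - snd p) \<ge> R - Ms\<close> by (simp add: field_simps)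
          then show ?thesis by blast
        qed
        then have "(R - Ms) / 2 \<le> \<bar>fst p - fst y\<bar> \<or> (R - Ms) / 2 \<le> \<bar>snd p - snd y\<bar>"
          by (metis abs_minus_commute abs_ge_self order_trans)
        then show ?thesis using d1 d2 b_def by (auto simp: min_le_iff_disj)
      qed
    qed
    then have "b \<le> infdist p (frontier (admissible g))"
      unfolding infdist_notempty[OF fne] by (intro cINF_greatest fne) auto
    then show "infdist p (frontier (admissible g)) > b / 2" using b by simp
  qed
  then show ?thesis using b by (intro exI[of _ "b/2"]) auto
qed



theorem mainTheorem8:
  fixes g :: "nat \<Rightarrow> real" and T :: real
    and rho1 rho2 :: "real \<Rightarrow> real^'d \<Rightarrow> real"
    and rho01 rho02 :: "real^'d \<Rightarrow> real"
  assumes "jump_rate g"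
    and "T > 0"
    and "species_blind_solution g T rho1 rho2"
    and "periodic_fun rho01" and "periodic_fun rho02"
    and "continuous_on UNIV rho01" and "continuous_on UNIV rho02"
    and "\<And>x. rho1 0 x = rho01 x" and "\<And>x. rho2 0 x = rho02 x"
    and "\<And>x. (rho01 x, rho02 x) \<in> admissible g"
  shows "0 < (INF p\<in>{0..<T} \<times> UNIV. ereal (min (rho1 (fst p) (snd p)) (rho2 (fst p) (snd p))))
       \<and> (INF p\<in>{0..<T} \<times> UNIV. ereal (min (rho1 (fst p) (snd p)) (rho2 (fst p) (snd p))))
           \<le> (SUP p\<in>{0..<T} \<times> UNIV. ereal (rho1 (fst p) (snd p) + rho2 (fst p) (snd p)))
       \<and> (SUP p\<in>{0..<T} \<times> UNIV. ereal (rho1 (fst p) (snd p) + rho2 (fst p) (snd p))) < rho_c g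
       \<and> (\<exists>\<delta>>0. \<forall>t\<in>{0..<T}. \<forall>x. (rho1 t x, rho2 t x) \<in> admissible g \<and>
              infdist (rho1 t x, rho2 t x) (frontier (admissible g)) > \<delta>)"
proof -
  note jr = assms(1) and T = assms(2) and sol = assms(3) and per01 = assms(4) and per02 = assms(5)
    and c01 = assms(6) and c02 = assms(7) and i1 = assms(8) and i2 = assms(9) and adm0 = assms(10)
  have pos: "\<forall>k\<ge>1. g k > 0" using jr by (simp add: jump_rate_def)
  have C1: "C12 T rho1" and C2: "C12 T rho2"
    and SB: "\<forall>t\<in>{0..<T}. \<forall>x. 0 \<le> rho1 t x + rho2 t x \<and> ereal (rho1 t x + rho2 t x) < rho_c g"
    and HE: "\<forall>t\<in>{0..<T}. \<forall>x.
        heat_eq_at rho1 (\<lambda>s y. flux g (rho1 s y) (rho1 s y + rho2 s y)) T t x \<and>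
        heat_eq_at rho2 (\<lambda>s y. flux g (rho2 s y) (rho1 s y + rho2 s y)) T t x"
    using sol by (simp_all add: species_blind_solution_def)
  have per1: "\<forall>t\<in>{0..<T}. periodic_fun (rho1 t)" and cont1: "continuous_on ({0..<T} \<times> UNIV) (\<lambda>(t,x). rho1 t x)"
    using C12_basic[OF C1] by auto
  have per2: "\<forall>t\<in>{0..<T}. periodic_fun (rho2 t)" and cont2: "continuous_on ({0..<T} \<times> UNIV) (\<lambda>(t,x). rho2 t x)"
    using C12_basic[OF C2] by auto
  have HE1: "\<forall>t\<in>{0..<T}. \<forall>x. heat_eq_at rho1 (\<lambda>s y. flux g (rho1 s y) (rho1 s y + rho2 s y)) T t x"
    and HE2: "\<forall>t\<in>{0..<T}. \<forall>x. heat_eq_at rho2 (\<lambda>s y. flux g (rho2 s y) (rho1 s y + rho2 s y)) T t x"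
    using HE by auto
  have a0: "0 < rho01 x" "0 < rho02 x" "ereal (rho01 x + rho02 x) < rho_c g" for x
    using adm0[of x] by (auto simp: admissible_def)
  have pers0: "periodic_fun (\<lambda>x. rho01 x + rho02 x)" using per01 per02 by (simp add: periodic_fun_def)
  have conts0: "continuous_on UNIV (\<lambda>x. rho01 x + rho02 x)" using c01 c02 by (intro continuous_intros)
  obtain xM where xM: "\<forall>x. rho01 x + rho02 x \<le> rho01 xM + rho02 xM" using per_max[OF pers0 conts0] by blast
  obtain xm where xm: "\<forall>x. rho01 xm + rho02 xm \<le> rho01 x + rho02 x" using per_min[OF pers0 conts0] by blast
  define Ms where "Ms = rho01 xM + rho02 xM"
  define ms where "ms = rho01 xm + rho02 xm"
  have ms_pos: "ms > 0" using a0[of xm] by (simp add: ms_def)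
  have Ms_lt: "ereal Ms < rho_c g" using a0[of xM] by (simp add: Ms_def)
  have sA: "rho1 t x + rho2 t x \<le> Ms" if t: "t \<in> {0..<T}" for t x
  proof (rule max_principle[where u = "\<lambda>t x. rho1 t x + rho2 t x", OF cont_add2[OF cont1 cont2] _ _ _ t])
    show "\<forall>t\<in>{0..<T}. periodic_fun (\<lambda>x. rho1 t x + rho2 t x)" using per1 per2 by (simp add: periodic_fun_def)
    show "\<And>x. rho1 0 x + rho2 0 x \<le> Ms" using xM by (simp add: i1 i2 Ms_def)
  next
    fix t x assume t0: "0 < t" "t < T" and mx: "\<forall>y. rho1 t y + rho2 t y \<le> rho1 t x + rho2 t x"
    have tin: "t \<in> {0..<T}" using t0 by simp
    have mx2: "\<forall>y. 1 * flux g (rho1 t y) (rho1 t y + rho2 t y) + 1 * flux g (rho2 t y) (rho1 t y + rho2 t y)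
        \<le> 1 * flux g (rho1 t x) (rho1 t x + rho2 t x) + 1 * flux g (rho2 t x) (rho1 t x + rho2 t x)"
    proof
      fix y
      show "1 * flux g (rho1 t y) (rho1 t y + rho2 t y) + 1 * flux g (rho2 t y) (rho1 t y + rho2 t y)
        \<le> 1 * flux g (rho1 t x) (rho1 t x + rho2 t x) + 1 * flux g (rho2 t x) (rho1 t x + rho2 t x)"
        using Psi_mono[OF pos _ mx[rule_format, of y]] SB tin by (simp add: W_val)
    qed
    obtain D1 D2 where D: "((\<lambda>s. rho1 s x) has_real_derivative D1) (at t within {0..<T})"
      "((\<lambda>s. rho2 s x) has_real_derivative D2) (at t within {0..<T})" "1 * D1 + 1 * D2 \<le> 0"
      using combo[OF HE1[rule_format, OF tin] HE2[rule_format, OF tin] mx2] by auto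
    show "\<exists>D. ((\<lambda>\<tau>. rho1 \<tau> x + rho2 \<tau> x) has_real_derivative D) (at t within {0..<T}) \<and> D \<le> 0"
      using DERIV_add[OF D(1,2)] D(3) by auto
  qed
  have sB: "ms \<le> rho1 t x + rho2 t x" if t: "t \<in> {0..<T}" for t x
  proof -
    have "- (rho1 t x + rho2 t x) \<le> - ms"
    proof (rule max_principle[where u = "\<lambda>t x. - (rho1 t x + rho2 t x)", OF cont_neg2[OF cont_add2[OF cont1 cont2]] _ _ _ t])
      show "\<forall>t\<in>{0..<T}. periodic_fun (\<lambda>x. - (rho1 t x + rho2 t x))" using per1 per2 by (simp add: periodic_fun_def)
      show "\<And>x. - (rho1 0 x + rho2 0 x) \<le> - ms" using xm unfolding i1 i2 ms_def by (metis neg_le_iff_le)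
    next
      fix t x assume t0: "0 < t" "t < T" and mx: "\<forall>y. - (rho1 t y + rho2 t y) \<le> - (rho1 t x + rho2 t x)"
      have tin: "t \<in> {0..<T}" using t0 by simp
      have mx2: "\<forall>y. (-1) * flux g (rho1 t y) (rho1 t y + rho2 t y) + (-1) * flux g (rho2 t y) (rho1 t y + rho2 t y)
          \<le> (-1) * flux g (rho1 t x) (rho1 t x + rho2 t x) + (-1) * flux g (rho2 t x) (rho1 t x + rho2 t x)"
      proof
        fix y
        have le: "rho1 t x + rho2 t x \<le> rho1 t y + rho2 t y" using mx[rule_format, of y] by linarith
        show "(-1) * flux g (rho1 t y) (rho1 t y + rho2 t y) + (-1) * flux g (rho2 t y) (rho1 t y + rho2 t y)
          \<le> (-1) * flux g (rho1 t x) (rho1 t x + rho2 t x) + (-1) * flux g (rho2 t x) (rho1 t x + rho2 t x)"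
        proof -
          have Wy: "flux g (rho1 t y) (rho1 t y + rho2 t y) + flux g (rho2 t y) (rho1 t y + rho2 t y)
            = (if rho1 t y + rho2 t y = 0 then 0 else Phig g (rho1 t y + rho2 t y))" by (rule W_val)
          have Wx: "flux g (rho1 t x) (rho1 t x + rho2 t x) + flux g (rho2 t x) (rho1 t x + rho2 t x)
            = (if rho1 t x + rho2 t x = 0 then 0 else Phig g (rho1 t x + rho2 t x))" by (rule W_val)
          have "(if rho1 t x + rho2 t x = 0 then 0 else Phig g (rho1 t x + rho2 t x))
              \<le> (if rho1 t y + rho2 t y = 0 then 0 else Phig g (rho1 t y + rho2 t y))"
            using Psi_mono[OF pos _ le] SB tin by simp
          then show ?thesis using Wx Wy by linarith
        qed
      qed
      obtain D1 D2 where D: "((\<lambda>s. rho1 s x) has_real_derivative D1) (at t within {0..<T})"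
        "((\<lambda>s. rho2 s x) has_real_derivative D2) (at t within {0..<T})" "(-1) * D1 + (-1) * D2 \<le> 0"
        using combo[OF HE1[rule_format, OF tin] HE2[rule_format, OF tin] mx2] by auto
      show "\<exists>D. ((\<lambda>\<tau>. - (rho1 \<tau> x + rho2 \<tau> x)) has_real_derivative D) (at t within {0..<T}) \<and> D \<le> 0"
        using DERIV_minus[OF DERIV_add[OF D(1,2)]] D(3) by auto
    qed
    then show ?thesis by simp
  qed
  have spos: "\<forall>t\<in>{0..<T}. \<forall>x. rho1 t x + rho2 t x > 0" using sB ms_pos by (auto intro: less_le_trans)
  have phinn: "\<forall>t\<in>{0..<T}. \<forall>x. Phig g (rho1 t x + rho2 t x) \<ge> 0"
    using Phi_props[OF pos] SB by (auto simp: dom_iff)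
  have s0pos: "rho01 x + rho02 x \<noteq> 0" for x using a0[of x] by simp
  have perc1: "periodic_fun (\<lambda>x. rho01 x / (rho01 x + rho02 x))" using per01 per02 by (simp add: periodic_fun_def)
  have contc1: "continuous_on UNIV (\<lambda>x. rho01 x / (rho01 x + rho02 x))" using c01 c02 s0pos by (intro continuous_intros) auto
  have perc2: "periodic_fun (\<lambda>x. rho02 x / (rho02 x + rho01 x))" using per01 per02 by (simp add: periodic_fun_def)
  have contc2: "continuous_on UNIV (\<lambda>x. rho02 x / (rho02 x + rho01 x))" using c01 c02 s0pos by (intro continuous_intros) (auto simp: add.commute)
  obtain x1 where x1: "\<forall>x. rho01 x / (rho01 x + rho02 x) \<le> rho01 x1 / (rho01 x1 + rho02 x1)" using per_max[OF perc1 contc1] by blast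
  obtain x2 where x2: "\<forall>x. rho02 x / (rho02 x + rho01 x) \<le> rho02 x2 / (rho02 x2 + rho01 x2)" using per_max[OF perc2 contc2] by blast
  define M1 where "M1 = rho01 x1 / (rho01 x1 + rho02 x1)"
  define M2 where "M2 = rho02 x2 / (rho02 x2 + rho01 x2)"
  have M1: "M1 < 1" using a0[of x1] by (simp add: M1_def)
  have M2: "M2 < 1" using a0[of x2] by (simp add: M2_def)
  have cb1: "rho1 t x / (rho1 t x + rho2 t x) \<le> M1" if t: "t \<in> {0..<T}" for t x
    by (rule conc_bound[OF cont1 cont2 per1 per2 spos phinn HE1 HE2 _ t]) (use x1 in \<open>simp add: i1 i2 M1_def\<close>)
  have cb2: "rho2 t x / (rho2 t x + rho1 t x) \<le> M2" if t: "t \<in> {0..<T}" for t x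
  proof (rule conc_bound[OF cont2 cont1 per2 per1 _ _ _ _ _ t])
    show "\<forall>t\<in>{0..<T}. \<forall>x. 0 < rho2 t x + rho1 t x" using spos by (simp add: add.commute)
    show "\<forall>t\<in>{0..<T}. \<forall>x. 0 \<le> Phig g (rho2 t x + rho1 t x)" using phinn by (simp add: add.commute)
    show "\<forall>t\<in>{0..<T}. \<forall>x. heat_eq_at rho2 (\<lambda>s y. flux g (rho2 s y) (rho2 s y + rho1 s y)) T t x"
      using HE2 by (simp add: add.commute)
    show "\<forall>t\<in>{0..<T}. \<forall>x. heat_eq_at rho1 (\<lambda>s y. flux g (rho1 s y) (rho2 s y + rho1 s y)) T t x"
      using HE1 by (simp add: add.commute)
    show "\<And>x. rho2 0 x / (rho2 0 x + rho1 0 x) \<le> M2" using x2 by (simp add: i1 i2 M2_def)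
  qed
  define m where "m = min ((1 - M2) * ms) ((1 - M1) * ms)"
  have m_pos: "m > 0" using M1 M2 ms_pos by (simp add: m_def)
  have low: "m \<le> rho1 t x \<and> m \<le> rho2 t x" if t: "t \<in> {0..<T}" for t x
  proof -
    have sp: "rho1 t x + rho2 t x > 0" using spos t by auto
    have "rho2 t x \<le> M2 * (rho1 t x + rho2 t x)" using cb2[OF t, of x] sp by (simp add: divide_le_eq add.commute)
    then have "(1 - M2) * (rho1 t x + rho2 t x) \<le> rho1 t x" by (simp add: algebra_simps)
    moreover have "(1 - M2) * ms \<le> (1 - M2) * (rho1 t x + rho2 t x)" using sB[OF t, of x] M2 by simp
    ultimately have A: "m \<le> rho1 t x" unfolding m_def by linarith
    have "rho1 t x \<le> M1 * (rho1 t x + rho2 t x)" using cb1[OF t, of x] sp by (simp add: divide_le_eq)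
    then have "(1 - M1) * (rho1 t x + rho2 t x) \<le> rho2 t x" by (simp add: algebra_simps)
    moreover have "(1 - M1) * ms \<le> (1 - M1) * (rho1 t x + rho2 t x)" using sB[OF t, of x] M1 by simp
    ultimately have B: "m \<le> rho2 t x" unfolding m_def by linarith
    show ?thesis using A B by simp
  qed
  let ?I = "(INF p\<in>{0..<T} \<times> UNIV. ereal (min (rho1 (fst p) (snd p)) (rho2 (fst p) (snd p))))"
  let ?S = "(SUP p\<in>{0..<T} \<times> UNIV. ereal (rho1 (fst p) (snd p) + rho2 (fst p) (snd p)))"
  have I: "ereal m \<le> ?I" by (rule INF_greatest) (use low in auto)
  have p0: "(0, 0) \<in> {0..<T} \<times> (UNIV :: (real^'d) set)" using T by simp
  have i0: "?I \<le> ereal (min (rho1 (fst (0::real,0::real^'d)) (snd (0::real,0::real^'d))) (rho2 (fst (0::real,0::real^'d)) (snd (0::real,0::real^'d))))"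
    by (rule INF_lower[OF p0])
  have "?I \<le> ereal (min (rho1 0 0) (rho2 0 0))" using i0 unfolding fst_conv snd_conv .
  also have "\<dots> \<le> ereal (rho1 0 0 + rho2 0 0)"
  proof -
    have "min (rho1 0 0) (rho2 0 0) \<le> rho1 0 0 + rho2 0 0" using low[of 0 0] m_pos T by auto
    then show ?thesis by (simp only: ereal_less_eq(3))
  qed
  also have "\<dots> \<le> ?S"
  proof -
    have "ereal (rho1 (fst (0::real,0::real^'d)) (snd (0::real,0::real^'d)) + rho2 (fst (0::real,0::real^'d)) (snd (0::real,0::real^'d))) \<le> ?S"
      by (rule SUP_upper[OF p0])
    then show ?thesis unfolding fst_conv snd_conv .
  qed
  finally have IS: "?I \<le> ?S" .
  have S: "?S \<le> ereal Ms" by (rule SUP_least) (use sA in auto)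
  obtain R where R: "ereal Ms < ereal R" "ereal R < rho_c g" using ereal_dense2[OF Ms_lt] by blast
  have ne: "admissible g \<noteq> {}" using adm0 by blast
  obtain \<delta> where \<delta>: "\<delta> > 0" "\<forall>p. m \<le> fst p \<longrightarrow> m \<le> snd p \<longrightarrow> fst p + snd p \<le> Ms \<longrightarrow>
            infdist p (frontier (admissible g)) > \<delta>"
    using adm_dist[OF m_pos _ R(2) ne, of Ms] R(1) by auto
  have fin: "\<forall>t\<in>{0..<T}. \<forall>x. (rho1 t x, rho2 t x) \<in> admissible g \<and>
              infdist (rho1 t x, rho2 t x) (frontier (admissible g)) > \<delta>"
  proof (intro ballI allI conjI)
    fix t x assume t: "t \<in> {0..<T}"
    show "(rho1 t x, rho2 t x) \<in> admissible g"
      using low[OF t, of x] m_pos SB t by (auto simp: admissible_def)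
    show "infdist (rho1 t x, rho2 t x) (frontier (admissible g)) > \<delta>"
      using \<delta>(2)[rule_format, of "(rho1 t x, rho2 t x)"] low[OF t, of x] sA[OF t, of x] by simp
  qed
  show ?thesis
    using I m_pos IS S Ms_lt fin \<delta>(1)
    by (auto intro: less_le_trans[of 0 "ereal m"] le_less_trans[of _ "ereal Ms"])
qed

end
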